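(* Let $p$ be a prime and $k,\ell$ integers with $k>0$, $\ell\ge0$; put $q=p^k$ and $Q=p^{\ell}$. Let $c\in\mathbb{F}_{q^3}$ and define \[ f(X)=(X^q-X)^3+c^{q^2}X^{q^2Q}+c^qX^{qQ}+cX^{Q}, \] i.e. $f(X)=X^3\circ(X^q-X)+(X^{q^2}+X^q+X)\circ cX^Q$. Then $f(X)$ permutes $\mathbb{F}_{q^3}$ if and only if $q\equiv 2\pmod 3$ and $c^{q^2}+c^q+c\ne 0$.
   Context: A polynomial permutes $\mathbb{F}_{q^3}$ if the induced map $\mathbb{F}_{q^3}\to\mathbb{F}_{q^3}$ is a bijection. *)

theory Defs
  imports "HOL-Computational_Algebra.Primes"
begin

end

theory Submission
  imports Defs "HOL-Number_Theory.Residues" "HOL-Computational_Algebra.Polynomial"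
begin

lemma prime3: "prime (3::nat)"
proof -
  have "{2..<3::nat} = {2}" by auto
  thus ?thesis by (simp add: prime_nat_iff')
qed

lemma mod3aux: "(t::nat) mod 3 = 2 \<Longrightarrow> t - 1 = 3 * ((t - 1) div 3) + 1" by presburger

lemma mod3aux1: "(t::nat) mod 3 = 1 \<Longrightarrow> t - 1 = 3 * ((t - 1) div 3)" by presburger

lemma mod3aux2: "(t::nat) mod 3 = 1 \<Longrightarrow> t = 3 * (t div 3) + 1" by presburger

lemma nonroot_exists:
  fixes P :: "'a::{finite,field} poly"
  assumes "P \<noteq> 0" "degree P < card (UNIV :: 'a set)"
  shows "\<exists>x. poly P x \<noteq> 0"
proof (rule ccontr)
  assume "\<not> ?thesis"
  hence "{x. poly P x = 0} = UNIV" by auto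
  with card_poly_roots_bound[OF assms(1)] assms(2) show False by simp
qed

lemma fermat_ff:
  fixes x :: "'a::{finite,field}"
  shows "x ^ card (UNIV :: 'a set) = x"
proof (cases "x = 0")
  case False
  have "x * (\<Prod>y\<in>UNIV-{0}. x * y) = x * x ^ (card (UNIV :: 'a set) - 1) * \<Prod>(UNIV-{0})"
    by (simp add: prod.distrib mult_ac)
  also have "x * x ^ (card (UNIV :: 'a set) - 1) = x ^ Suc (card (UNIV :: 'a set) - 1)"
    by (subst power_Suc) auto
  also have "Suc (card (UNIV :: 'a set) - 1) = card (UNIV :: 'a set)"
    using finite_UNIV_card_ge_0[where ?'a = 'a] by simp
  also have "(\<Prod>y\<in>UNIV-{0}. x * y) = (\<Prod>y\<in>UNIV-{0}. y)"
    by (rule prod.reindex_bij_witness[of _ "\<lambda>y. y / x" "\<lambda>y. x * y"]) (use False in auto)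
  finally show ?thesis
    by simp
qed (use finite_UNIV_card_ge_0[where ?'a = 'a] in auto)


lemma cubic_id0:
  fixes a b c :: "'b::comm_ring_1"
  shows "a ^ 3 = a*b*c - (a*b + b*c + c*a) * a + a*a*(a+b+c)"
  by (simp add: algebra_simps power3_eq_cube)

lemma cubic_id:
  fixes a b c :: "'b::comm_ring_1"
  assumes "a + b + c = 0"
  shows "a ^ 3 = a*b*c - (a*b + b*c + c*a) * a"
    and "b ^ 3 = a*b*c - (a*b + b*c + c*a) * b"
    and "c ^ 3 = a*b*c - (a*b + b*c + c*a) * c"
proof -
  show "a ^ 3 = a*b*c - (a*b + b*c + c*a) * a" using cubic_id0[of a b c] assms by simp
  have "b ^ 3 = b*c*a - (b*c + c*a + a*b) * b + b*b*(b+c+a)" by (rule cubic_id0)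
  moreover have "b + c + a = 0" using assms by (simp add: ac_simps)
  ultimately show "b ^ 3 = a*b*c - (a*b + b*c + c*a) * b" by (simp add: ac_simps)
  have "c ^ 3 = c*a*b - (c*a + a*b + b*c) * c + c*c*(c+a+b)" by (rule cubic_id0)
  moreover have "c + a + b = 0" using assms by (simp add: ac_simps)
  ultimately show "c ^ 3 = a*b*c - (a*b + b*c + c*a) * c" by (simp add: ac_simps)
qed

locale ffq =
  fixes q Q :: nat and c :: "'a::{finite,field}"
  assumes addq: "\<And>x y::'a. (x + y) ^ q = x ^ q + y ^ q"
    and addQ: "\<And>x y::'a. (x + y) ^ Q = x ^ Q + y ^ Q"
    and card_q: "card (UNIV :: 'a set) = q ^ 3"
    and q1: "q > 1" and Q0: "Q > 0"
    and three: "((3::'a) = 0) \<longleftrightarrow> q mod 3 = 0"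
begin

definition lam :: "'a \<Rightarrow> 'a" where "lam x = x ^ q - x"
definition T :: "'a \<Rightarrow> 'a" where "T x = x ^ (q^2) + x ^ q + x"
definition h :: "'a \<Rightarrow> 'a" where "h y = lam (y ^ 3)"
definition f :: "'a \<Rightarrow> 'a" where "f x = lam x ^ 3 + T (c * x ^ Q)"

lemma q0: "q > 0" using q1 by simp

lemma zq[simp]: "(0::'a) ^ q = 0" using q0 by simp
lemma oneq[simp]: "(1::'a) ^ q = 1" by simp

lemma negq: "(- x :: 'a) ^ q = - (x ^ q)"
proof -
  have "(- x + x) ^ q = (- x) ^ q + x ^ q" by (rule addq)
  thus ?thesis by (simp add: eq_neg_iff_add_eq_0)
qed

lemma diffq: "(x - y :: 'a) ^ q = x ^ q - y ^ q"
  using addq[of x "- y"] negq[of y] by simp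

lemma negQ: "(- x :: 'a) ^ Q = - (x ^ Q)"
proof -
  have "(- x + x) ^ Q = (- x) ^ Q + x ^ Q" by (rule addQ)
  thus ?thesis using Q0 by (simp add: eq_neg_iff_add_eq_0 zero_power)
qed

lemma diffQ: "(x - y :: 'a) ^ Q = x ^ Q - y ^ Q"
  using addQ[of x "- y"] negQ[of y] by simp

lemma fer: "(x::'a) ^ (q ^ 3) = x"
  using fermat_ff[of x] card_q by simp

lemma pq2: "((x::'a) ^ q) ^ q = x ^ (q ^ 2)"
  by (simp add: power_mult[symmetric] power2_eq_square)

lemma pq3: "((x::'a) ^ (q ^ 2)) ^ q = x"
proof -
  have "((x::'a) ^ (q ^ 2)) ^ q = x ^ (q ^ 3)"
    by (simp add: power_mult[symmetric] power2_eq_square power3_eq_cube)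
  thus ?thesis using fer by simp
qed

lemma pq3': "((x::'a) ^ q) ^ (q ^ 2) = x"
  by (metis pq3 power_mult mult.commute)

lemma addq2: "(x + y :: 'a) ^ (q ^ 2) = x ^ (q ^ 2) + y ^ (q ^ 2)"
  by (simp add: addq flip: pq2)

lemma diffq2: "(x - y :: 'a) ^ (q ^ 2) = x ^ (q ^ 2) - y ^ (q ^ 2)"
  by (simp add: diffq flip: pq2)

lemma T_fixed: "T w ^ q = T w"
  unfolding T_def by (simp add: addq pq2 pq3)

lemma lam_add: "lam (x + y) = lam x + lam y"
  unfolding lam_def by (simp add: addq)

lemma lam_diff: "lam (x - y) = lam x - lam y"
  unfolding lam_def by (simp add: diffq)

lemma lam_zero_iff: "lam x = 0 \<longleftrightarrow> x ^ q = x"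
  unfolding lam_def by simp

lemma lam_T: "lam (T w) = 0"
  using T_fixed lam_zero_iff by simp

lemma T_lam: "T (lam x) = 0"
  unfolding T_def lam_def by (simp add: diffq diffq2 pq2 pq3 pq3')

lemma lam_f: "lam (f x) = h (lam x)"
  unfolding f_def h_def by (simp add: lam_add lam_T)

lemma powQ_fixed: "a ^ q = a \<Longrightarrow> (a ^ Q) ^ q = (a::'a) ^ Q"
  by (metis mult.commute power_mult)

lemma f_shift:
  assumes "a ^ q = a"
  shows "f (x + a) = f x + a ^ Q * T c"
proof -
  have l: "lam (x + a) = lam x" using assms by (simp add: lam_add lam_zero_iff)
  have a1: "(a ^ Q) ^ q = a ^ Q" using powQ_fixed[OF assms] .
  have a2: "(a ^ Q) ^ (q ^ 2) = a ^ Q" using a1 pq2 by metis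
  have "T (c * (x + a) ^ Q) = T (c * x ^ Q) + a ^ Q * T c"
    unfolding T_def by (simp add: addQ addq addq2 distrib_left power_mult_distrib a1 a2 algebra_simps)
  thus ?thesis unfolding f_def l by simp
qed

lemma cube_q: "((w::'a) ^ 3) ^ q = (w ^ q) ^ 3"
  by (metis power_mult mult.commute)

lemma unit_pow: "(u::'a) \<noteq> 0 \<Longrightarrow> u ^ (q ^ 3 - 1) = 1"
proof -
  assume u: "u \<noteq> 0"
  have "q ^ 3 \<ge> 1" using q0 by simp
  hence "u ^ (q ^ 3 - 1) * u = u ^ (q ^ 3)" by (metis Suc_diff_le diff_Suc_1 power_Suc2)
  also have "\<dots> = u" by (rule fer)
  finally show ?thesis using u by simp
qed

lemma cube_inj:
  assumes q2: "q mod 3 = 2" and e: "(y::'a) ^ 3 = z ^ 3"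
  shows "y = z"
proof (cases "z = 0")
  case True
  then show ?thesis using e by simp
next
  case False
  have "q ^ 3 mod 3 = (q mod 3) ^ 3 mod 3" by (simp add: power_mod)
  hence "q ^ 3 mod 3 = 2" using q2 by simp
  hence N: "q ^ 3 - 1 = 3 * ((q ^ 3 - 1) div 3) + 1" by (rule mod3aux)
  define u where "u = y / z"
  have u3: "u ^ 3 = 1" using e False by (simp add: u_def power_divide)
  have "u \<noteq> 0" using u3 by auto
  hence "1 = u ^ (3 * ((q ^ 3 - 1) div 3) + 1)" using unit_pow N by metis
  also have "\<dots> = u" by (simp add: power_mult u3)
  finally show ?thesis using False by (simp add: u_def)
qed

lemma fix_cube_zero:
  assumes q2: "q mod 3 = 2" and Tw: "T w = 0" and fw: "(w ^ 3) ^ q = w ^ 3"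
  shows "w = 0"
proof -
  have "(w ^ q) ^ 3 = w ^ 3" using fw cube_q by simp
  hence wq: "w ^ q = w" using cube_inj q2 by blast
  hence "w ^ (q ^ 2) = w" using pq2 by metis
  hence "3 * w = 0" using Tw wq by (simp add: T_def)
  moreover have "(3::'a) \<noteq> 0" using three q2 by simp
  ultimately show ?thesis by simp
qed

lemma key:
  assumes q2: "q mod 3 = 2" and Ty: "T y = 0" and Tz: "T z = 0"
    and fA: "(y ^ 3 - z ^ 3) ^ q = y ^ 3 - z ^ 3"
  shows "y = z"
proof -
  define y1 y2 z1 z2 where "y1 = y ^ q" "y2 = y ^ (q ^ 2)" "z1 = z ^ q" "z2 = z ^ (q ^ 2)"
  have y12: "y1 ^ q = y2" "y2 ^ q = y" "z1 ^ q = z2" "z2 ^ q = z" "y ^ q = y1" "z ^ q = z1"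
    unfolding y1_y2_z1_z2_def by (simp_all add: pq2 pq3)
  have sy: "y + y1 + y2 = 0" using Ty unfolding T_def y1_y2_z1_z2_def by (simp add: algebra_simps)
  have sz: "z + z1 + z2 = 0" using Tz unfolding T_def y1_y2_z1_z2_def by (simp add: algebra_simps)
  define e2 e3 f2 f3 where "e2 = y*y1 + y1*y2 + y2*y" "e3 = y*y1*y2"
    "f2 = z*z1 + z1*z2 + z2*z" "f3 = z*z1*z2"
  have e2q: "e2 ^ q = e2" "e3 ^ q = e3" "f2 ^ q = f2" "f3 ^ q = f3"
    unfolding e2_e3_f2_f3_def by (simp_all add: addq power_mult_distrib y12 algebra_simps)
  note cy = cubic_id[OF sy, folded e2_e3_f2_f3_def]
  note cz = cubic_id[OF sz, folded e2_e3_f2_f3_def]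
  define A where "A = y ^ 3 - z ^ 3"
  have A1: "y1 ^ 3 - z1 ^ 3 = A"
    using fA unfolding A_def y1_y2_z1_z2_def by (simp add: diffq cube_q)
  have Aq: "A ^ q = A" using fA by (simp add: A_def)
  have "(y1 ^ 3 - z1 ^ 3) ^ q = y2 ^ 3 - z2 ^ 3" by (simp add: diffq cube_q y12)
  hence A2: "y2 ^ 3 - z2 ^ 3 = A" using A1 Aq by simp
  have s1: "A + A + A = (y ^ 3 - z ^ 3) + (y1 ^ 3 - z1 ^ 3) + (y2 ^ 3 - z2 ^ 3)"
    unfolding A1 A2 by (simp only: A_def)
  also have "\<dots> = (e3 - e2*y - (f3 - f2*z)) + (e3 - e2*y1 - (f3 - f2*z1)) + (e3 - e2*y2 - (f3 - f2*z2))"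
    by (simp only: cy cz)
  also have "\<dots> = 3 * (e3 - f3) - e2 * (y + y1 + y2) + f2 * (z + z1 + z2)"
    by (simp add: algebra_simps)
  also have "\<dots> = 3 * (e3 - f3)" by (simp only: sy sz mult_zero_right diff_zero add_0_right)
  finally have m3: "3 * (A - (e3 - f3)) = 0" by (simp add: algebra_simps)
  have three_ne: "(3::'a) \<noteq> 0" using three q2 by simp
  have "A - (e3 - f3) = 0" using m3 three_ne by (metis mult_eq_0_iff)
  hence Ae: "A = e3 - f3" by simp
  have "(e3 - e2*y) - (f3 - f2*z) = e3 - f3" using Ae cy(1) cz(1) unfolding A_def by simp
  hence ef: "e2 * y = f2 * z" by (simp add: algebra_simps)
  have fixz: "w = 0" if "T w = 0" "(w ^ 3) ^ q = w ^ 3" for w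
    using fix_cube_zero[OF q2 that] .
  show ?thesis
  proof (cases "e2 = 0")
    case False
    define r where "r = f2 / e2"
    have rq: "r ^ q = r" by (simp add: r_def power_divide e2q)
    have yr: "y = r * z" using ef False by (simp add: r_def field_simps)
    have Ar: "A = (r ^ 3 - 1) * z ^ 3" unfolding A_def yr by (simp add: power_mult_distrib left_diff_distrib)
    show ?thesis
    proof (cases "r ^ 3 = 1")
      case True
      hence "r ^ 3 = 1 ^ 3" by simp
      hence "r = 1" by (rule cube_inj[OF q2])
      thus ?thesis using yr by (metis mult_1)
    next
      case ne: False
      have z3: "z ^ 3 = A / (r ^ 3 - 1)" using Ar ne by (simp add: eq_divide_eq mult.commute)
      have r3: "(r ^ 3 - 1) ^ q = r ^ 3 - 1" by (simp only: diffq cube_q rq oneq)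
      have "(z ^ 3) ^ q = z ^ 3" unfolding z3 power_divide r3 Aq ..
      hence "z = 0" by (rule fixz[OF Tz])
      thus ?thesis using yr by simp
    qed
  next
    case True
    show ?thesis
    proof (cases "f2 = 0")
      case False
      hence z0: "z = 0" using ef True by simp
      have "(y ^ 3) ^ q = y ^ 3" using Aq z0 by (simp add: A_def)
      hence "y = 0" by (rule fixz[OF Ty])
      thus ?thesis using z0 by simp
    next
      case f0: True
      have y3: "y ^ 3 = e3" using cy(1) True by simp
      have "y = 0" by (rule fixz[OF Ty]) (simp only: y3 e2q)
      moreover have z3: "z ^ 3 = f3" using cz(1) f0 by simp
      have "z = 0" by (rule fixz[OF Tz]) (simp only: z3 e2q)
      ultimately show ?thesis by simp
    qed
  qed
qed

lemma q_lt: "q < q ^ 2" "q ^ 2 < q ^ 3" "q < card (UNIV :: 'a set)"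
proof -
  show "q < q ^ 2" using power_strict_increasing[OF _ q1, of 1 2] by simp
  show "q ^ 2 < q ^ 3" using power_strict_increasing[OF _ q1, of 2 3] by simp
  thus "q < card (UNIV :: 'a set)" using \<open>q < q ^ 2\<close> card_q by simp
qed

lemma nr1: "\<exists>x::'a. x ^ q \<noteq> x"
proof -
  let ?P = "monom (1::'a) q - monom 1 1"
  have "coeff ?P q = 1" using q1 by simp
  hence "?P \<noteq> 0" by (metis coeff_0 zero_neq_one)
  moreover have "degree ?P \<le> q" using q1
    by (intro degree_diff_le) (auto simp: degree_monom_eq)
  ultimately obtain x where "poly ?P x \<noteq> 0"
    using nonroot_exists q_lt(3) by (meson le_less_trans)
  thus ?thesis by (auto simp: poly_monom)
qed

lemma nr2: "\<exists>x::'a. T x \<noteq> 0"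
proof -
  let ?P = "monom (1::'a) (q ^ 2) + monom 1 q + monom 1 1"
  have ne: "q ^ 2 \<noteq> q" "q ^ 2 \<noteq> 1" "q \<noteq> q ^ 2" "1 \<noteq> q ^ 2" "Suc 0 \<noteq> q ^ 2" using q_lt(1) q1 by linarith+
  have "coeff ?P (q ^ 2) = 1" using ne by simp
  hence "?P \<noteq> 0" by (metis coeff_0 zero_neq_one)
  moreover have "degree ?P \<le> q ^ 2" using q1 q_lt
    by (intro degree_add_le) (auto simp: degree_monom_eq)
  ultimately obtain x where "poly ?P x \<noteq> 0"
    using nonroot_exists q_lt card_q by (metis le_less_trans)
  thus ?thesis by (auto simp: poly_monom T_def)
qed

lemma nr3:
  assumes "m > 0" "m + 1 < card (UNIV :: 'a set)"
  shows "\<exists>a::'a. a \<noteq> 0 \<and> a ^ m \<noteq> 1"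
proof -
  let ?P = "monom (1::'a) (m + 1) - monom 1 1"
  have "coeff ?P (m + 1) = 1" using assms by simp
  hence "?P \<noteq> 0" by (metis coeff_0 zero_neq_one)
  moreover have "degree ?P \<le> m + 1"
    by (intro degree_diff_le) (auto simp: degree_monom_eq)
  ultimately obtain x where x: "poly ?P x \<noteq> 0"
    using nonroot_exists assms(2) by (meson le_less_trans)
  hence "x ^ (m + 1) \<noteq> x" by (auto simp: poly_monom)
  hence "x \<noteq> 0 \<and> x ^ m \<noteq> 1" using assms(1) by auto
  thus ?thesis by blast
qed

theorem main: "bij f \<longleftrightarrow> (q mod 3 = 2 \<and> T c \<noteq> 0)"
proof
  assume b: "bij f"
  hence inj: "inj f" and sur: "surj f" by (auto simp: bij_def)
  have Tc: "T c \<noteq> 0"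
  proof
    assume "T c = 0"
    hence "f (0 + 1) = f 0" using f_shift[of 1 0] by simp
    hence "(0::'a) + 1 = 0" using inj by (meson injD)
    thus False by simp
  qed
  define S where "S = range lam"
  have hS: "inj_on h S"
  proof -
    have sub: "S \<subseteq> h ` S"
    proof
      fix s assume "s \<in> S"
      then obtain x where s: "s = lam x" by (auto simp: S_def)
      obtain w where "x = f w" using sur by (metis surjD)
      hence "s = h (lam w)" using s lam_f by simp
      thus "s \<in> h ` S" by (auto simp: S_def)
    qed
    have fS: "finite S" by simp
    have "card (h ` S) = card S"
      using card_mono[OF finite_imageI[OF fS] sub] card_image_le[OF fS, of h] by linarith
    thus ?thesis using eq_card_imp_inj_on fS by blast
  qed
  have "q mod 3 = 2"
  proof (rule ccontr)
    assume ne: "q mod 3 \<noteq> 2"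
    have "q mod 3 < 3" by simp
    hence "q mod 3 = 0 \<or> q mod 3 = 1" using ne by linarith
    thus False
    proof
      assume qm0: "q mod 3 = 0"
      hence three0: "(3::'a) = 0" using three by simp
      obtain x where Tx: "T x \<noteq> 0" using nr2 by blast
      have "lam (lam x) = T x - 3 * x ^ q"
        unfolding lam_def T_def by (simp add: diffq pq2 algebra_simps)
      hence ll: "lam (lam x) = T x" using three0 by simp
      have "h (T x) = 0" unfolding h_def lam_def using T_fixed by (simp add: cube_q)
      moreover have "h 0 = 0" by (simp add: h_def lam_def)
      moreover have "T x \<in> S" unfolding S_def using ll by (metis rangeI)
      moreover have "0 \<in> S" unfolding S_def by (metis rangeI lam_def zq diff_self)
      ultimately have "T x = 0" using hS by (metis inj_onD)
      with Tx show False ..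
    next
      assume qm1: "q mod 3 = 1"
      have "q ^ 3 mod 3 = (q mod 3) ^ 3 mod 3" by (simp add: power_mod)
      hence q31: "q ^ 3 mod 3 = 1" using qm1 by simp
      define m where "m = (q ^ 3 - 1) div 3"
      have N: "q ^ 3 - 1 = 3 * m" unfolding m_def using mod3aux1[OF q31] .
      have "q ^ 3 \<ge> 4" using q_lt q1 by linarith
      hence m0: "m > 0" using N by linarith
      have "m + 1 < card (UNIV :: 'a set)" using N m0 card_q by linarith
      then obtain a :: 'a where a: "a \<noteq> 0" "a ^ m \<noteq> 1" using nr3 m0 by blast
      define w where "w = a ^ m"
      have w3: "w ^ 3 = 1" unfolding w_def
        using unit_pow[OF a(1)] N by (metis power_mult mult.commute)
      have w1: "w \<noteq> 1" using a(2) by (simp add: w_def)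
      have "w ^ q = w ^ (3 * (q div 3) + 1)" using mod3aux2[OF qm1] by metis
      also have "\<dots> = w" by (simp add: power_add power_mult w3)
      finally have wq: "w ^ q = w" .
      obtain x :: 'a where xq: "x ^ q \<noteq> x" using nr1 by blast
      define y where "y = lam x"
      have y0: "y \<noteq> 0" using xq by (simp add: y_def lam_zero_iff)
      have lw: "lam (w * x) = w * y" unfolding y_def lam_def
        by (simp add: power_mult_distrib wq right_diff_distrib)
      have "h (w * y) = h y" unfolding h_def by (simp add: power_mult_distrib w3)
      moreover have "w * y \<in> S" "y \<in> S" unfolding S_def using lw y_def by (metis rangeI)+
      ultimately have "w * y = y" using hS by (metis inj_onD)
      hence "w = 1" using y0 by simp
      with w1 show False ..
    qed
  qed
  with Tc show "q mod 3 = 2 \<and> T c \<noteq> 0" by simp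
next
  assume a: "q mod 3 = 2 \<and> T c \<noteq> 0"
  have "inj f"
  proof (rule injI)
    fix x y assume e: "f x = f y"
    have "h (lam x) = h (lam y)" using lam_f e by metis
    hence "lam ((lam x) ^ 3 - (lam y) ^ 3) = 0" by (simp add: h_def lam_diff)
    hence fx: "((lam x) ^ 3 - (lam y) ^ 3) ^ q = (lam x) ^ 3 - (lam y) ^ 3"
      by (simp add: lam_zero_iff)
    have ly: "lam x = lam y" using key[OF _ T_lam T_lam fx] a by simp
    define d where "d = y - x"
    have "lam d = 0" using ly by (simp add: d_def lam_diff)
    hence dq: "d ^ q = d" by (simp add: lam_zero_iff)
    have "f y = f x + d ^ Q * T c" using f_shift[OF dq, of x] by (simp add: d_def)
    hence "d ^ Q * T c = 0" using e by simp
    hence "d = 0" using a by simp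
    thus "x = y" by (simp add: d_def)
  qed
  thus "bij f" by (simp add: bij_def finite_UNIV_inj_surj)
qed
end

theorem theorem1p8:
  fixes c :: "'a::{finite,field}" and p k l :: nat
  assumes "prime p" and "k > 0" and "card (UNIV :: 'a set) = p ^ (3 * k)"
  shows "bij (\<lambda>x::'a. (x ^ (p ^ k) - x) ^ 3
                 + c ^ ((p ^ k) ^ 2) * x ^ ((p ^ k) ^ 2 * p ^ l)
                 + c ^ (p ^ k) * x ^ (p ^ k * p ^ l)
                 + c * x ^ (p ^ l))
         \<longleftrightarrow> (p ^ k mod 3 = 2 \<and> c ^ ((p ^ k) ^ 2) + c ^ (p ^ k) + c \<noteq> 0)"
proof -
  have fin: "finite (UNIV :: 'a set)" by simp
  have "CHAR('a) > 0" using finite_imp_CHAR_pos[OF fin] .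
  hence pc: "prime CHAR('a)" by (rule prime_CHAR_semidom)
  have "CHAR('a) dvd p ^ (3 * k)" using CHAR_dvd_CARD[where 'a='a] assms(3) by simp
  hence "CHAR('a) dvd p" using pc prime_dvd_power by blast
  hence CH: "CHAR('a) = p" using pc assms(1) primes_dvd_imp_eq by blast
  have addm: "(x + y :: 'a) ^ (p ^ m) = x ^ (p ^ m) + y ^ (p ^ m)" for x y m
    by (rule freshmans_dream') (use pc CH in auto)
  have p1: "p > 1" using assms(1) prime_gt_1_nat by blast
  have q1: "p ^ k > 1" using one_less_power[OF p1 assms(2)] by simp
  have three: "((3::'a) = 0) \<longleftrightarrow> p ^ k mod 3 = 0"
  proof -
    have "((3::'a) = 0) \<longleftrightarrow> (of_nat 3 :: 'a) = 0" by simp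
    also have "\<dots> \<longleftrightarrow> p dvd 3" using of_nat_eq_0_iff_char_dvd[where 'a='a] CH by metis
    also have "\<dots> \<longleftrightarrow> p = 3" using primes_dvd_imp_eq[OF assms(1) prime3] by auto
    also have "\<dots> \<longleftrightarrow> 3 dvd p" using primes_dvd_imp_eq[OF prime3 assms(1)] by auto
    also have "\<dots> \<longleftrightarrow> 3 dvd p ^ k" using assms(2) prime_dvd_power_iff[OF prime3 assms(2)] by simp
    finally show ?thesis by presburger
  qed
  have cq: "card (UNIV::'a set) = (p ^ k) ^ 3" using assms(3) by (metis mult.commute power_mult)
  interpret ffq "p ^ k" "p ^ l" c
    by unfold_locales (use addm cq q1 three p1 in auto)
  have feq: "(\<lambda>x::'a. (x ^ (p ^ k) - x) ^ 3
                 + c ^ ((p ^ k) ^ 2) * x ^ ((p ^ k) ^ 2 * p ^ l)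
                 + c ^ (p ^ k) * x ^ (p ^ k * p ^ l)
                 + c * x ^ (p ^ l)) = f"
    by (rule ext) (simp add: f_def lam_def T_def power_mult_distrib mult.commute[of _ "p ^ l"] power_mult add.assoc)
  show ?thesis unfolding feq main by (simp add: T_def)
qed

end
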